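(* Let $P^1(z) = \tfrac12 z(1+z)$ and let $\mathcal K^1$ be the filled Julia set of $P^1$ (equivalently, the closure of the basin of attraction $U^1$ of the attracting fixed point $0$ of $P^1$). Fix bounds $d \ge 2$, $K \ge 2$, $M \ge \tfrac12$ and an escape radius $R$ for these bounds. Then there exist $\lambda > 1$ depending only on $P^1$ and $c > 0$ depending only on $d, K, M$ and $P^1$ such that the following holds: if $\{P_m\}_{m=1}^\infty$ is any bounded sequence of polynomials with bounds $d,K,M$ and $N \ge 1$ is such that $P_1 = P_2 = \cdots = P_N = P^1$, then \[ \mathrm m\big(\mathcal S^N \setminus \mathcal K^1\big) < c\,\lambda^{-N}, \] where $\mathcal S^N = Q_N^{-1}(\mathrm D(0,R))$ and $\mathrm m$ denotes two-dimensional Lebesgue measure.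
   Context: A bounded sequence of polynomials with bounds $d \ge 2$, $K \ge 1$, $M \ge 0$ is a sequence $\{P_m\}_{m=1}^\infty$ with $P_m(z) = a_{d_m,m}z^{d_m} + \dots + a_{0,m}$, $2 \le d_m \le d$, $1/K \le |a_{d_m,m}| < K$ and $|a_{k,m}| \le M$ for $0 \le k \le d_m - 1$. $Q_{m,n} = P_n \circ \cdots \circ P_{m+1}$ and $Q_N = Q_{0,N}$. An escape radius for the bounds is a number $R>0$, depending only on $d,K,M$, such that for every bounded sequence with these bounds, every $m \ge 0$ and every $|z| > R$, $|Q_{m,n}(z)| \to \infty$ as $n \to \infty$. $\mathrm D(a,r)$ denotes the open disc of centre $a$ and radius $r$. *)

theory Defs
  imports "HOL-Analysis.Analysis" "HOL-Computational_Algebra.Polynomial"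
begin

text \<open>A sequence of polynomials is a function P :: nat => complex poly; only P m with m >= 1
  is used (P 0 is ignored).\<close>

definition bounded_poly_seq :: "nat \<Rightarrow> real \<Rightarrow> real \<Rightarrow> (nat \<Rightarrow> complex poly) \<Rightarrow> bool" where
  "bounded_poly_seq d K M P \<longleftrightarrow>
     (\<forall>m\<ge>1. 2 \<le> degree (P m) \<and> degree (P m) \<le> d
        \<and> 1 / K \<le> cmod (lead_coeff (P m)) \<and> cmod (lead_coeff (P m)) < K
        \<and> (\<forall>k < degree (P m). cmod (coeff (P m) k) \<le> M))"

text \<open>Q P m n = P_n o ... o P_(m+1) (identity when n <= m).\<close>
fun Qc :: "(nat \<Rightarrow> complex poly) \<Rightarrow> nat \<Rightarrow> nat \<Rightarrow> complex \<Rightarrow> complex" where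
  "Qc P m 0 z = z"
| "Qc P m (Suc n) z = (if Suc n \<le> m then z else poly (P (Suc n)) (Qc P m n z))"

definition escape_radius :: "nat \<Rightarrow> real \<Rightarrow> real \<Rightarrow> real \<Rightarrow> bool" where
  "escape_radius d K M R \<longleftrightarrow> R > 0 \<and>
     (\<forall>P. bounded_poly_seq d K M P \<longrightarrow>
        (\<forall>m z. cmod z > R \<longrightarrow> filterlim (\<lambda>n. cmod (Qc P m n z)) at_top sequentially))"

definition P1 :: "complex poly" where
  "P1 = [:0, 1/2, 1/2:]"

definition filled_julia :: "complex poly \<Rightarrow> complex set" where
  "filled_julia p = {z. bounded (range (\<lambda>n. (poly p ^^ n) z))}"

end

theory Submission
  imports Defs
begin


abbreviation f1 :: "complex \<Rightarrow> complex" where "f1 \<equiv> poly P1"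

lemma f1_eq: "f1 z = z/2 + z^2/2"
  by (simp add: P1_def power2_eq_square algebra_simps)

lemma f1_shift: "f1 z + 1/2 = (z + 1/2)^2/2 + 3/8"
  by (simp add: f1_eq power2_eq_square field_simps)

lemma Qc_eq:
  assumes "\<forall>j. 1 \<le> j \<and> j \<le> N \<longrightarrow> P j = P1" "n \<le> N"
  shows "Qc P 0 n z = (f1 ^^ n) z"
  using assms(2) by (induction n) (auto simp: assms(1))

lemma orbit_range: "range (\<lambda>n. (f1 ^^ n) z) = insert z (range (\<lambda>n. (f1 ^^ n) (f1 z)))"
proof (intro set_eqI iffI)
  fix x assume "x \<in> range (\<lambda>n. (f1 ^^ n) z)"
  then obtain n where n: "x = (f1 ^^ n) z" by auto
  show "x \<in> insert z (range (\<lambda>n. (f1 ^^ n) (f1 z)))"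
  proof (cases n)
    case (Suc m) then show ?thesis using n by (auto simp: funpow_Suc_right simp del: funpow.simps)
  qed (use n in simp)
next
  fix x assume "x \<in> insert z (range (\<lambda>n. (f1 ^^ n) (f1 z)))"
  then show "x \<in> range (\<lambda>n. (f1 ^^ n) z)"
  proof
    assume "x = z" then show ?thesis by (metis funpow_0 rangeI)
  next
    assume "x \<in> range (\<lambda>n. (f1 ^^ n) (f1 z))"
    then obtain n where "x = (f1 ^^ n) (f1 z)" by auto
    then have "x = (f1 ^^ Suc n) z" by (simp add: funpow_Suc_right del: funpow.simps)
    then show ?thesis by blast
  qed
qed

lemma K_iff: "z \<in> filled_julia P1 \<longleftrightarrow> f1 z \<in> filled_julia P1"
  unfolding filled_julia_def using orbit_range[of z] by (simp add: bounded_insert)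

lemma disc_inv: "cmod (w + 1/2) < 3/2 \<Longrightarrow> cmod (f1 w + 1/2) < 3/2"
proof -
  assume a: "cmod (w + 1/2) < 3/2"
  have "cmod (f1 w + 1/2) \<le> cmod ((w+1/2)^2/2) + cmod (3/8 :: complex)"
    unfolding f1_shift by (rule norm_triangle_ineq)
  also have "\<dots> = (cmod (w+1/2))^2/2 + 3/8" by (simp add: norm_power)
  also have "\<dots> < 3/2"
  proof -
    have "(cmod (w+1/2))^2 < (3/2)^2" using a by (intro power_strict_mono) auto
    then have "(cmod (w+1/2))^2 < 9/4" by (simp add: power_divide)
    then show ?thesis by linarith
  qed
  finally show ?thesis .
qed

lemma disc_in_K: assumes "cmod (z + 1/2) < 3/2" shows "z \<in> filled_julia P1"
proof -
  have o: "cmod ((f1 ^^ n) z + 1/2) < 3/2" for n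
    by (induction n) (use assms disc_inv in auto)
  have "range (\<lambda>n. (f1 ^^ n) z) \<subseteq> cball (-1/2) (3/2)"
    using o by (auto simp: dist_norm less_imp_le norm_minus_commute)
  then show ?thesis unfolding filled_julia_def using bounded_cball bounded_subset by blast
qed

lemma big_grow: assumes "cmod z \<ge> 3" shows "cmod (f1 z) \<ge> cmod z"
proof -
  have "f1 z = z * (z + 1) / 2" by (simp add: f1_eq power2_eq_square field_simps)
  then have "cmod (f1 z) = cmod (z * (z + 1) / 2)" by (rule arg_cong)
  also have "\<dots> = cmod z * cmod (z+1) / 2" by (simp add: norm_mult norm_divide)
  finally have "cmod (f1 z) = cmod z * cmod (z+1) / 2" .
  moreover have "cmod (z+1) \<ge> cmod z - 1" using norm_triangle_ineq2[of z "-1"] by simp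
  moreover have "cmod z * cmod (z+1) \<ge> cmod z * 2"
    by (rule mult_left_mono) (use assms \<open>cmod (z+1) \<ge> cmod z - 1\<close> in auto)
  ultimately show ?thesis using assms by linarith
qed

lemma big_grow_n: "cmod z \<ge> 3 \<Longrightarrow> cmod ((f1 ^^ n) z) \<ge> cmod z"
proof (induction n)
  case (Suc n)
  then show ?case using big_grow[of "(f1 ^^ n) z"] by simp
qed simp

lemma f1n_cont: "continuous_on UNIV (f1 ^^ n)"
  by (induction n) (auto intro!: continuous_intros continuous_on_compose2[where f="f1^^_" and g=f1, simplified])

lemma f1n_meas[measurable]: "(f1 ^^ n) \<in> borel_measurable borel"
  using f1n_cont borel_measurable_continuous_onI by blast

lemma K_eq: "filled_julia P1 = {z. \<exists>B::nat. \<forall>n. cmod ((f1 ^^ n) z) \<le> real B}"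
  unfolding filled_julia_def bounded_iff
  apply auto
  apply (meson order_trans real_nat_ceiling_ge)
  done

lemma K_borel[measurable]: "filled_julia P1 \<in> sets borel"
  unfolding K_eq by measurable

definition psi :: "real^2 \<Rightarrow> complex" where "psi v = Complex (v$1) (v$2)"
definition phi :: "complex \<Rightarrow> real^2" where "phi z = vector [Re z, Im z]"
lemma phi_nth[simp]: "phi z $ 1 = Re z" "phi z $ 2 = Im z" by (simp_all add: phi_def)
lemma psi_phi[simp]: "psi (phi z) = z" by (simp add: psi_def complex_eq_iff)
lemma phi_psi[simp]: "phi (psi v) = v" by (simp add: psi_def vec_eq_iff forall_2)
lemma Re_psi[simp]: "Re (psi v) = v$1" and Im_psi[simp]: "Im (psi v) = v$2" by (simp_all add: psi_def)
lemma box_pre: "psi -` box l u = box (phi l) (phi u)"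
  by (auto simp: mem_box Basis_complex_def psi_def Basis_vec_def forall_2 axis_def inner_vec_def sum_2)
lemma prod_basis2: "(\<Prod>b\<in>(Basis::(real^2) set). f b) = f (axis 1 1) * f (axis 2 1)"
proof -
  have B: "Basis = (\<lambda>i. axis i (1::real)) ` (UNIV :: 2 set)" by (auto simp: Basis_vec_def)
  have I: "inj (\<lambda>i. axis i (1::real) :: real^2)" by (auto simp: inj_def axis_eq_axis)
  have "(\<Prod>b\<in>(Basis::(real^2) set). f b) = (\<Prod>i\<in>UNIV. f (axis i 1))"
    unfolding B using prod.reindex[OF I, of f] by simp
  also have "\<dots> = f (axis 1 1) * f (axis 2 1)" by (simp add: UNIV_2)
  finally show ?thesis .
qed
lemma ball_basis2: "(\<forall>b\<in>(Basis::(real^2) set). P b) = (P (axis 1 1) \<and> P (axis 2 1))"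
  by (auto simp: Basis_vec_def forall_2)
lemma em_box2: "emeasure lborel (box (a::real^2) b) = (if a$1 \<le> b$1 \<and> a$2 \<le> b$2 then ennreal ((b$1-a$1)*(b$2-a$2)) else 0)"
  by (simp add: emeasure_lborel_box_eq prod_basis2 ball_basis2 inner_axis cong: if_cong) 
lemma norm_psi: "cmod (psi v) = norm v"
  unfolding norm_vec_def L2_set_def by (simp add: sum_2 psi_def cmod_def)
lemma norm_phi: "norm (phi z) = cmod z"
  unfolding norm_vec_def L2_set_def by (simp add: sum_2 cmod_def)
lemma psi_linear: "bounded_linear psi"
  by (rule bounded_linear_intro[where K=1]) (auto simp: psi_def complex_eq_iff norm_psi[unfolded psi_def])
lemma phi_linear: "bounded_linear phi"
  by (rule bounded_linear_intro[where K=1]) (auto simp: vec_eq_iff forall_2 norm_phi)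
lemma psi_cont: "continuous_on UNIV psi"
  using psi_linear linear_continuous_on by blast
lemma psi_meas[measurable]: "psi \<in> borel_measurable borel"
  using psi_cont by (simp add: borel_measurable_continuous_onI)
lemma lborel_complex: "(lborel :: complex measure) = distr lborel borel psi"
proof (rule lborel_eqI)
  fix l u :: complex
  assume a: "\<And>b. b \<in> Basis \<Longrightarrow> l \<bullet> b \<le> u \<bullet> b"
  have "Re l \<le> Re u" "Im l \<le> Im u" using a[of 1] a[of \<i>] by (auto simp: Basis_complex_def)
  then show "emeasure (distr lborel borel psi) (box l u) = (\<Prod>b\<in>Basis. (u - l) \<bullet> b)"
    by (simp add: emeasure_distr box_pre em_box2 Basis_complex_def ennreal_mult)
qed simp

definition G :: "real^2 \<Rightarrow> real^2" where "G v = phi (f1 (psi v))"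
definition G' :: "real^2 \<Rightarrow> real^2 \<Rightarrow> real^2" where "G' v h = phi ((psi v + 1/2) * psi h)"

lemma f1_deriv: "(f1 has_field_derivative (z + 1/2)) (at z)"
proof -
  have "((\<lambda>z. z/2 + z^2/2) has_field_derivative (1/2 + 2*z/2)) (at z)"
    by (auto intro!: derivative_eq_intros)
  then show ?thesis unfolding f1_eq[abs_def] by (simp add: field_simps)
qed

lemma G_deriv: "(G has_derivative G' v) (at v within S)"
proof -
  have d1: "(psi has_derivative psi) (at v within S)" using psi_linear bounded_linear_imp_has_derivative by blast
  have d2: "(f1 has_derivative (\<lambda>h. (psi v + 1/2) * h)) (at (psi v) within psi ` S)"
    using has_field_derivative_at_within[OF f1_deriv[of "psi v"]]
    unfolding has_field_derivative_def .
  have d3: "(phi has_derivative phi) (at (f1 (psi v)) within f1 ` psi ` S)"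
    using phi_linear bounded_linear_imp_has_derivative by blast
  have "((phi \<circ> f1 \<circ> psi) has_derivative (phi \<circ> (\<lambda>h. (psi v + 1/2) * h) \<circ> psi)) (at v within S)"
    by (intro diff_chain_within d1 d2 d3)
  then show ?thesis unfolding G_def[abs_def] G'_def[abs_def] by (simp add: o_def)
qed

lemma G'_mat: "matrix (G' v) = (\<chi> i j. if i = 1 then (if j = 1 then v$1 + 1/2 else - v$2) else (if j = 1 then v$2 else v$1 + 1/2))"
  unfolding matrix_def G'_def
  by (auto simp: vec_eq_iff forall_2 psi_def axis_def)

lemma det_G': "det (matrix (G' v)) = (cmod (psi v + 1/2))^2"
  unfolding G'_mat det_2 by (simp add: cmod_def power2_eq_square)


definition E :: "real \<Rightarrow> nat \<Rightarrow> complex set" where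
  "E R N = {z. cmod ((f1 ^^ N) z) < R} - filled_julia P1"
definition F :: "real \<Rightarrow> nat \<Rightarrow> (real^2) set" where
  "F R N = psi -` E R N"

lemma E_borel[measurable]: "E R N \<in> sets borel"
  unfolding E_def by measurable

lemma F_borel[measurable]: "F R N \<in> sets borel"
  unfolding F_def using measurable_sets[OF psi_meas E_borel] by simp

lemma F_leb: "F R N \<in> sets lebesgue"
  using F_borel by (simp add: sets_completionI_sets)

lemma E_small: "z \<in> E R N \<Longrightarrow> cmod z < max R 3"
proof (rule ccontr)
  assume z: "z \<in> E R N" "\<not> cmod z < max R 3"
  then have "cmod ((f1 ^^ N) z) \<ge> cmod z" using big_grow_n by auto
  then show False using z by (auto simp: E_def)
qed

lemma F_small: "v \<in> F R N \<Longrightarrow> norm v < max R 3"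
  using E_small[of "psi v" R N] by (auto simp: F_def norm_psi)

lemma F_bounded: "bounded (F R N)"
  unfolding bounded_iff using F_small less_imp_le by blast

lemma F_lmeas: "F R N \<in> lmeasurable"
  using F_bounded F_leb bounded_set_imp_lmeasurable by blast

lemma E_Suc: "E R (Suc N) = f1 -` E R N"
  unfolding E_def using K_iff by (auto simp: funpow_Suc_right simp del: funpow.simps)

lemma F_Suc: "F R (Suc N) = G -` F R N"
  unfolding F_def G_def E_Suc by auto

lemma E_far: "z \<in> E R N \<Longrightarrow> cmod (z + 1/2) \<ge> 3/2"
  using disc_in_K by (force simp: E_def)

lemma f1_diff: "f1 z - f1 w = (z - w) * (z + w + 1) / 2"
  by (simp add: f1_eq power2_eq_square field_simps)

lemma G_inj_aux: assumes "G v = G w" "v \<noteq> w" shows "v$1 + w$1 = -1"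
proof -
  have "f1 (psi v) = f1 (psi w)" using assms(1) unfolding G_def by (metis psi_phi)
  then have "(psi v - psi w) * (psi v + psi w + 1) = 0" using f1_diff[of "psi v" "psi w"] by simp
  moreover have "psi v \<noteq> psi w" using assms(2) by (metis phi_psi)
  ultimately have "psi v + psi w + 1 = 0" by simp
  then have "Re (psi v + psi w + 1) = 0" by simp
  then show ?thesis by simp
qed

lemma G_inj1: "inj_on G (S \<inter> {v. v$1 > -1/2})"
  by (rule inj_onI) (use G_inj_aux in force)
lemma G_inj2: "inj_on G (S \<inter> {v. v$1 < -1/2})"
  by (rule inj_onI) (use G_inj_aux in force)

lemma key_piece:
  assumes S: "S \<subseteq> F R (Suc N)" "S \<in> sets lebesgue" "inj_on G S"
  shows "measure lebesgue S \<le> 4/9 * measure lebesgue (F R N)"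
proof -
  define h where "h x = \<bar>det (matrix (G' x))\<bar>" for x
  have h_eq: "h x = (cmod (psi x + 1/2))^2" for x by (simp add: h_def det_G')
  have Sb: "bounded S" using S(1) F_bounded bounded_subset by blast
  have Sl: "S \<in> lmeasurable" using Sb S(2) bounded_set_imp_lmeasurable by blast
  define B where "B = (max R 3 + 1)^2"
  have hB: "norm (h x) \<le> B" if "x \<in> S" for x
  proof -
    have "norm x < max R 3" using S(1) that F_small by blast
    then have "cmod (psi x + 1/2) \<le> max R 3 + 1"
      using norm_triangle_ineq[of "psi x" "1/2"] by (simp add: norm_psi)
    then show ?thesis unfolding h_eq B_def by (simp add: power_mono)
  qed
  have hc: "continuous_on S h" unfolding h_eq using psi_cont
    by (intro continuous_intros) (auto intro: continuous_on_subset)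
  have hai: "h absolutely_integrable_on S"
    by (rule measurable_bounded_by_integrable_imp_absolutely_integrable[OF _ S(2) _ hB])
      (use continuous_imp_measurable_on_sets_lebesgue[OF hc S(2)] integrable_on_const[OF Sl] in auto)
  have hi: "h integrable_on S" using hai set_lebesgue_integral_eq_integral(1) by blast
  have der: "\<And>x. x \<in> S \<Longrightarrow> (G has_derivative G' x) (at x within S)" by (rule G_deriv)
  have GSl: "G ` S \<in> lmeasurable"
    using measurable_differentiable_image_eq[OF S(2) der S(3)] hi unfolding h_def by blast
  have meq: "measure lebesgue (G ` S) = integral S h"
    using measure_differentiable_image_eq[OF S(2) der S(3)] hi unfolding h_def by blast
  have "integral S (\<lambda>x. 9/4) \<le> integral S h"
  proof (rule integral_le[OF integrable_on_const[OF Sl] hi])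
    fix x assume "x \<in> S"
    then have "cmod (psi x + 1/2) \<ge> 3/2" using S(1) E_far by (auto simp: F_def)
    then have "(3/2)^2 \<le> (cmod (psi x + 1/2))^2" by (intro power_mono) auto
    then show "9/4 \<le> h x" unfolding h_eq by (simp add: power_divide)
  qed
  moreover have "integral S (\<lambda>x. 9/4) = 9/4 * measure lebesgue S"
    using lmeasure_integral[OF Sl] integral_cmul[of S "9/4" "\<lambda>x. 1::real"] by simp
  moreover have "measure lebesgue (G ` S) \<le> measure lebesgue (F R N)"
    by (rule measure_mono_fmeasurable) (use S(1) F_Suc GSl F_lmeas in auto)
  ultimately show ?thesis using meq by linarith
qed

lemma step: "measure lebesgue (F R (Suc N)) \<le> 8/9 * measure lebesgue (F R N)"
proof -
  let ?S = "F R (Suc N)"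
  define S1 where "S1 = ?S \<inter> {v. v$1 > -1/2}"
  define S2 where "S2 = ?S \<inter> {v. v$1 < -1/2}"
  define S0 where "S0 = ?S \<inter> {v. v$1 = -1/2}"
  have o1: "open {v::real^2. v$1 > -1/2}" by (simp add: open_halfspace_component_gt_cart)
  have o2: "open {v::real^2. v$1 < -1/2}" by (simp add: open_halfspace_component_lt_cart)
  have L1: "S1 \<in> sets lebesgue" unfolding S1_def using F_leb o1 by (intro sets.Int) auto
  have L2: "S2 \<in> sets lebesgue" unfolding S2_def using F_leb o2 by (intro sets.Int) auto
  have neg: "negligible S0"
  proof -
    have "negligible {x::real^2. axis 1 1 \<bullet> x = -1/2}"
      by (rule negligible_hyperplane) (simp add: axis_eq_0_iff)
    moreover have "S0 \<subseteq> {x::real^2. axis 1 1 \<bullet> x = -1/2}" by (auto simp: S0_def inner_axis')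
    ultimately show ?thesis using negligible_subset by blast
  qed
  have L0: "S0 \<in> sets lebesgue" using neg negligible_iff_null_sets by blast
  have i1: "inj_on G S1" unfolding S1_def by (rule G_inj1)
  have i2: "inj_on G S2" unfolding S2_def by (rule G_inj2)
  have m1: "measure lebesgue S1 \<le> 4/9 * measure lebesgue (F R N)"
    by (rule key_piece[OF _ L1 i1]) (auto simp: S1_def)
  have m2: "measure lebesgue S2 \<le> 4/9 * measure lebesgue (F R N)"
    by (rule key_piece[OF _ L2 i2]) (auto simp: S2_def)
  have m0: "measure lebesgue S0 = 0" using neg negligible_imp_measure0 by blast
  have "?S = (S1 \<union> S2) \<union> S0" by (auto simp: S1_def S2_def S0_def)
  then have "measure lebesgue ?S \<le> measure lebesgue (S1 \<union> S2) + measure lebesgue S0"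
    using measure_Un_le[of "S1 \<union> S2" lebesgue S0] L1 L2 L0 by auto
  also have "\<dots> \<le> measure lebesgue S1 + measure lebesgue S2 + measure lebesgue S0"
    using measure_Un_le[of S1 lebesgue S2] L1 L2 by auto
  finally show ?thesis using m0 m1 m2 by linarith
qed

lemma iter: "measure lebesgue (F R N) \<le> (8/9)^N * measure lebesgue (F R 0)"
proof (induction N)
  case (Suc N)
  then show ?case using step[of R N] by (simp add: mult_left_mono)
qed simp

lemma em_E: "emeasure lborel (E R N) = ennreal (measure lebesgue (F R N))"
proof -
  have "emeasure lborel (E R N) = emeasure (distr lborel borel psi) (E R N)"
    by (simp add: lborel_complex[symmetric])
  also have "\<dots> = emeasure lborel (F R N)"
    by (simp add: emeasure_distr F_def)
  also have "\<dots> = ennreal (measure lborel (F R N))"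
    using emeasure_bounded_finite[OF F_bounded, of R N] by (intro emeasure_eq_ennreal_measure) (simp add: less_top)
  also have "\<dots> = ennreal (measure lebesgue (F R N))" by (subst measure_completion) auto
  finally show ?thesis .
qed

theorem lemma2p1:
  shows "\<exists>lam::real. lam > 1 \<and>
    (\<forall>(d::nat) (K::real) (M::real) (R::real).
       d \<ge> 2 \<longrightarrow> K \<ge> 2 \<longrightarrow> M \<ge> 1/2 \<longrightarrow> escape_radius d K M R \<longrightarrow>
       (\<exists>c::real. c > 0 \<and>
          (\<forall>P (N::nat). bounded_poly_seq d K M P \<longrightarrow> N \<ge> 1 \<longrightarrow>
             (\<forall>j. 1 \<le> j \<and> j \<le> N \<longrightarrow> P j = P1) \<longrightarrow>
             emeasure lborel ({z. Qc P 0 N z \<in> ball 0 R} - filled_julia P1)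
               < ennreal (c * lam powr (- real N)))))"
proof (rule exI[of _ "9/8::real"], intro conjI allI impI)
  show "(9/8::real) > 1" by simp
next
  fix d :: nat and K M R :: real
  define c where "c = measure lebesgue (F R 0) + 1"
  have c0: "c > 0" unfolding c_def using measure_nonneg[of lebesgue "F R 0"] by linarith
  show "\<exists>c::real. c > 0 \<and>
          (\<forall>P (N::nat). bounded_poly_seq d K M P \<longrightarrow> N \<ge> 1 \<longrightarrow>
             (\<forall>j. 1 \<le> j \<and> j \<le> N \<longrightarrow> P j = P1) \<longrightarrow>
             emeasure lborel ({z. Qc P 0 N z \<in> ball 0 R} - filled_julia P1)
               < ennreal (c * (9/8) powr (- real N)))"
  proof (intro exI[of _ c] conjI allI impI c0)
    fix P and N :: nat
    assume "bounded_poly_seq d K M P" "N \<ge> 1"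
    assume hP: "\<forall>j. 1 \<le> j \<and> j \<le> N \<longrightarrow> P j = P1"
    have set_eq: "{z. Qc P 0 N z \<in> ball 0 R} - filled_julia P1 = E R N"
      unfolding E_def using Qc_eq[OF hP order_refl] by (auto simp: dist_norm)
    have pw: "(9/8::real) powr (- real N) = (8/9)^N"
      by (simp add: powr_minus powr_realpow power_one_over[symmetric] inverse_eq_divide)
    have "measure lebesgue (F R N) \<le> (8/9)^N * measure lebesgue (F R 0)" by (rule iter)
    also have "\<dots> < (8/9)^N * c" unfolding c_def by simp
    finally have lt: "measure lebesgue (F R N) < c * (9/8) powr (- real N)"
      by (simp add: pw mult.commute)
    show "emeasure lborel ({z. Qc P 0 N z \<in> ball 0 R} - filled_julia P1)
               < ennreal (c * (9/8) powr (- real N))"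
      unfolding set_eq em_E using lt measure_nonneg[of lebesgue "F R N"]
      by (simp add: ennreal_less_iff)
  qed
qed

end
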